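(* Let $n \geq 2$ be a power of 2. Then $\mathsf{QNAADT}(\mathsf{ADDR}_n) = \Theta\big(\mathrm{spar}(\mathsf{ADDR}_n)^{\frac{1}{\log 3}}\big)$.
   Context: $\mathsf{ADDR}_n:\{0,1\}^{\log n+n}\to\{0,1\}$ is $\mathsf{ADDR}_n(x,y)=y_{\mathsf{bin}(x)}$ for $x\in\{0,1\}^{\log n}$, $y\in\{0,1\}^n$, where $\mathsf{bin}(x)\in[n]$ is the integer whose binary representation is $x$. $\mathsf{AND}_S(z)=\prod_{i\in S}z_i$. $\mathrm{spar}(f)$ is the number of nonzero coefficients in the unique expansion $f=\sum_S\widetilde f(S)\mathsf{AND}_S$ with real coefficients. A quantum non-adaptive AND decision tree of cost $c$ for a function on $m$ bits works on $|S_1,\dots,S_c\rangle|b\rangle|w\rangle$ with $S_j\subseteq[m]$, $b\in\{0,1\}^c$, arbitrary workspace; it starts from an input-independent state $|\psi\rangle$, applies once the oracle $O_z$ mapping $|S_1,\dots,S_c\rangle|b_1,\dots,b_c\rangle|w\rangle$ to $|S_1,\dots,S_c\rangle|b_1\oplus\mathsf{AND}_{S_1}(z),\dots,b_c\oplus\mathsf{AND}_{S_c}(z)\rangle|w\rangle$, and accepts with probability $\|\Pi O_z|\psi\rangle\|^2$ for a fixed projector $\Pi$; $\mathsf{QNAADT}(f)$ is the minimum cost of one computing $f$ with success probability at least $2/3$ on every input. Logarithms are base 2. *)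

theory Defs
  imports Complex_Main
begin

(* Inputs on m bits are bool lists of length m; bit i (0-indexed) is z ! i. *)

definition AND :: "nat set \<Rightarrow> bool list \<Rightarrow> bool" where
  "AND S z = (\<forall>i\<in>S. z ! i)"

definition ANDr :: "nat set \<Rightarrow> bool list \<Rightarrow> real" where
  "ANDr S z = (\<Prod>i\<in>S. if z ! i then 1 else 0)"

definition and_coeffs :: "nat \<Rightarrow> (bool list \<Rightarrow> bool) \<Rightarrow> nat set \<Rightarrow> real" where
  "and_coeffs m f = (THE c. (\<forall>S. \<not> S \<subseteq> {..<m} \<longrightarrow> c S = 0) \<and>
      (\<forall>z. length z = m \<longrightarrow> of_bool (f z) = (\<Sum>S\<in>Pow {..<m}. c S * ANDr S z)))"

definition spar :: "nat \<Rightarrow> (bool list \<Rightarrow> bool) \<Rightarrow> nat" where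
  "spar m f = card {S \<in> Pow {..<m}. and_coeffs m f S \<noteq> 0}"

definition bin :: "bool list \<Rightarrow> nat" where
  "bin x = (\<Sum>i<length x. of_bool (x ! i) * 2 ^ (length x - 1 - i))"

(* ADDR_n for n = 2^k, on k + n bits: first k bits are the address x, remaining n bits are y *)
definition ADDR :: "nat \<Rightarrow> bool list \<Rightarrow> bool" where
  "ADDR k z = (drop k z) ! bin (take k z)"

(* computational basis |S_1..S_c>|b_1..b_c>|w> with workspace basis {..<d} *)
definition qbasis :: "nat \<Rightarrow> nat \<Rightarrow> nat \<Rightarrow> (nat set list \<times> bool list \<times> nat) set" where
  "qbasis m c d = {(Ss, bs, w). length Ss = c \<and> (\<forall>S\<in>set Ss. S \<subseteq> {..<m}) \<and> length bs = c \<and> w < d}"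

(* O_z (an involutive permutation of the basis) applied to a state vector *)
definition query_op :: "bool list \<Rightarrow> (nat set list \<times> bool list \<times> nat \<Rightarrow> complex)
    \<Rightarrow> (nat set list \<times> bool list \<times> nat \<Rightarrow> complex)" where
  "query_op z \<psi> = (\<lambda>(Ss, bs, w). \<psi> (Ss, map (\<lambda>(b, S). b \<noteq> AND S z) (zip bs Ss), w))"

definition is_projector :: "'b set \<Rightarrow> ('b \<Rightarrow> 'b \<Rightarrow> complex) \<Rightarrow> bool" where
  "is_projector B P \<longleftrightarrow> (\<forall>x\<in>B. \<forall>y\<in>B. P x y = cnj (P y x)) \<and>
      (\<forall>x\<in>B. \<forall>y\<in>B. (\<Sum>u\<in>B. P x u * P u y) = P x y)"

definition is_state :: "'b set \<Rightarrow> ('b \<Rightarrow> complex) \<Rightarrow> bool" where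
  "is_state B \<psi> \<longleftrightarrow> (\<forall>e. e \<notin> B \<longrightarrow> \<psi> e = 0) \<and> (\<Sum>e\<in>B. (cmod (\<psi> e))\<^sup>2) = 1"

definition proj_norm2 :: "'b set \<Rightarrow> ('b \<Rightarrow> 'b \<Rightarrow> complex) \<Rightarrow> ('b \<Rightarrow> complex) \<Rightarrow> real" where
  "proj_norm2 B P v = (\<Sum>x\<in>B. (cmod (\<Sum>y\<in>B. P x y * v y))\<^sup>2)"

definition qnaadt_computes :: "nat \<Rightarrow> (bool list \<Rightarrow> bool) \<Rightarrow> nat \<Rightarrow> bool" where
  "qnaadt_computes m f c \<longleftrightarrow> (\<exists>d \<psi> P.
     is_state (qbasis m c d) \<psi> \<and> is_projector (qbasis m c d) P \<and>
     (\<forall>z. length z = m \<longrightarrow>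
        (if f z then proj_norm2 (qbasis m c d) P (query_op z \<psi>) \<ge> 2/3
         else proj_norm2 (qbasis m c d) P (query_op z \<psi>) \<le> 1/3)))"

definition QNAADT :: "nat \<Rightarrow> (bool list \<Rightarrow> bool) \<Rightarrow> nat" where
  "QNAADT m f = (LEAST c. qnaadt_computes m f c)"

end

theory Submission
  imports Defs "HOL-Analysis.L2_Norm"
begin


lemma bin_Nil[simp]: "bin [] = 0" by (simp add: bin_def)

lemma bin_Cons: "bin (b # xs) = of_bool b * 2 ^ length xs + bin xs"
proof -
  have "bin (b # xs) = (\<Sum>i<Suc (length xs). of_bool ((b#xs) ! i) * 2 ^ (length xs - i))"
    by (simp add: bin_def)
  also have "\<dots> = of_bool b * 2 ^ length xs + (\<Sum>i<length xs. of_bool ((b#xs) ! Suc i) * 2 ^ (length xs - Suc i))"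
    by (subst sum.lessThan_Suc_shift) simp
  also have "\<dots> = of_bool b * 2 ^ length xs + bin xs"
    by (simp add: bin_def)
  finally show ?thesis .
qed

lemma bin_less: "bin xs < 2 ^ length xs"
  by (induction xs) (auto simp: bin_Cons)

lemma bin_inj: "length xs = length ys \<Longrightarrow> bin xs = bin ys \<Longrightarrow> xs = ys"
proof (induction xs ys rule: list_induct2)
  case (Cons x xs y ys)
  have "x = y"
  proof (rule ccontr)
    assume "x \<noteq> y"
    then show False using Cons bin_less[of xs] bin_less[of ys]
      by (cases x; cases y) (auto simp: bin_Cons)
  qed
  then show ?case using Cons by (auto simp: bin_Cons)
qed simp


definition nrm2 :: "'b set \<Rightarrow> ('b \<Rightarrow> complex) \<Rightarrow> real" where
  "nrm2 B v = (\<Sum>x\<in>B. (cmod (v x))\<^sup>2)"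

lemma L2_cmod: "L2_set (\<lambda>x. cmod (v x)) B = sqrt (nrm2 B v)"
  by (simp add: L2_set_def nrm2_def)

lemma proj_le:
  assumes fin: "finite B" and pr: "is_projector B P"
  shows "proj_norm2 B P w \<le> nrm2 B w"
proof -
  define q where "q x = (\<Sum>y\<in>B. P x y * w y)" for x
  have herm: "\<And>x y. x \<in> B \<Longrightarrow> y \<in> B \<Longrightarrow> cnj (P x y) = P y x"
    using pr unfolding is_projector_def by (metis complex_cnj_cnj)
  have idem: "\<And>x y. x \<in> B \<Longrightarrow> y \<in> B \<Longrightarrow> (\<Sum>u\<in>B. P x u * P u y) = P x y"
    using pr unfolding is_projector_def by blast
  have inner: "(\<Sum>x\<in>B. cnj (q x) * P x y) = (\<Sum>y'\<in>B. cnj (w y') * P y' y)" if y: "y \<in> B" for y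
  proof -
    have "(\<Sum>x\<in>B. cnj (q x) * P x y) = (\<Sum>x\<in>B. \<Sum>y'\<in>B. cnj (w y') * (P y' x * P x y))"
      unfolding q_def cnj_sum sum_distrib_right
      by (intro sum.cong refl) (simp add: herm mult_ac)
    also have "\<dots> = (\<Sum>y'\<in>B. cnj (w y') * (\<Sum>x\<in>B. P y' x * P x y))"
      by (subst sum.swap) (simp add: sum_distrib_left)
    also have "\<dots> = (\<Sum>y'\<in>B. cnj (w y') * P y' y)"
      using idem y by simp
    finally show ?thesis .
  qed
  have step1: "(\<Sum>x\<in>B. cnj (q x) * q x) = (\<Sum>y\<in>B. cnj (w y) * q y)"
  proof -
    have "(\<Sum>x\<in>B. cnj (q x) * q x) = (\<Sum>x\<in>B. \<Sum>y\<in>B. w y * (cnj (q x) * P x y))"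
      unfolding q_def[of x for x] sum_distrib_left by (intro sum.cong refl) (simp add: mult_ac q_def)
    also have "\<dots> = (\<Sum>y\<in>B. w y * (\<Sum>x\<in>B. cnj (q x) * P x y))"
      by (subst sum.swap) (simp add: sum_distrib_left)
    also have "\<dots> = (\<Sum>y\<in>B. w y * (\<Sum>y'\<in>B. cnj (w y') * P y' y))"
      using inner by simp
    also have "\<dots> = (\<Sum>y'\<in>B. cnj (w y') * (\<Sum>y\<in>B. P y' y * w y))"
      unfolding sum_distrib_left by (subst sum.swap) (intro sum.cong refl, simp add: mult_ac)
    also have "\<dots> = (\<Sum>y\<in>B. cnj (w y) * q y)" by (simp add: q_def)
    finally show ?thesis .
  qed
  define Q where "Q = (\<Sum>x\<in>B. (cmod (q x))\<^sup>2)"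
  have Qpn: "proj_norm2 B P w = Q" by (simp add: Q_def proj_norm2_def q_def)
  have "complex_of_real Q = (\<Sum>x\<in>B. cnj (q x) * q x)"
    unfolding Q_def of_real_sum by (intro sum.cong refl) (simp only: complex_norm_square mult.commute)
  hence QE: "complex_of_real Q = (\<Sum>y\<in>B. cnj (w y) * q y)" using step1 by simp
  have Q0: "Q \<ge> 0" unfolding Q_def by (simp add: sum_nonneg)
  have "Q = cmod (complex_of_real Q)" using Q0 by simp
  also have "\<dots> = cmod (\<Sum>y\<in>B. cnj (w y) * q y)" by (simp only: QE)
  also have "\<dots> \<le> (\<Sum>y\<in>B. \<bar>cmod (w y)\<bar> * \<bar>cmod (q y)\<bar>)"
    by (rule order_trans[OF norm_sum]) (simp add: norm_mult)
  also have "\<dots> \<le> sqrt (nrm2 B w) * sqrt Q"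
    using L2_set_mult_ineq[where f="\<lambda>y. cmod (w y)" and A=B and g="\<lambda>y. cmod (q y)"]
    by (simp add: L2_cmod Q_def nrm2_def)
  finally have QQ: "Q \<le> sqrt (nrm2 B w) * sqrt Q" .
  have "Q \<le> nrm2 B w"
  proof (cases "Q = 0")
    case True thus ?thesis by (simp add: nrm2_def sum_nonneg)
  next
    case False
    hence "sqrt Q > 0" using Q0 by simp
    moreover have "sqrt Q * sqrt Q \<le> sqrt (nrm2 B w) * sqrt Q" using QQ Q0 by (simp add: abs_of_nonneg)
    ultimately have "sqrt Q \<le> sqrt (nrm2 B w)" by (blast intro: mult_right_le_imp_le)
    thus ?thesis by simp
  qed
  thus ?thesis using Qpn by simp
qed

lemma pn_sqrt: "sqrt (proj_norm2 B P v) = L2_set (\<lambda>x. cmod (\<Sum>y\<in>B. P x y * v y)) B"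
  by (simp add: proj_norm2_def L2_set_def)

lemma pn_diff:
  assumes fin: "finite B" and pr: "is_projector B P"
    and u1: "nrm2 B u \<le> 1" and v1: "nrm2 B v \<le> 1"
    and gap: "proj_norm2 B P v + 1/3 \<le> proj_norm2 B P u"
  shows "1/36 \<le> nrm2 B (\<lambda>x. u x - v x)"
proof -
  define a where "a = sqrt (proj_norm2 B P u)"
  define b where "b = sqrt (proj_norm2 B P v)"
  define dd where "dd = sqrt (proj_norm2 B P (\<lambda>x. u x - v x))"
  have split: "(\<Sum>y\<in>B. P x y * u y) = (\<Sum>y\<in>B. P x y * v y) + (\<Sum>y\<in>B. P x y * (u y - v y))" for x
  proof -
    have "(\<Sum>y\<in>B. P x y * u y) = (\<Sum>y\<in>B. P x y * v y + P x y * (u y - v y))"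
      by (intro sum.cong refl) (simp add: right_diff_distrib)
    also have "\<dots> = (\<Sum>y\<in>B. P x y * v y) + (\<Sum>y\<in>B. P x y * (u y - v y))"
      by (rule sum.distrib)
    finally show ?thesis .
  qed
  have "a \<le> L2_set (\<lambda>x. cmod (\<Sum>y\<in>B. P x y * v y) + cmod (\<Sum>y\<in>B. P x y * (u y - v y))) B"
    unfolding a_def pn_sqrt by (rule L2_set_mono) (simp_all only: split norm_triangle_ineq norm_ge_zero)
  also have "\<dots> \<le> b + dd"
    unfolding b_def dd_def pn_sqrt by (rule L2_set_triangle_ineq)
  finally have ab: "a \<le> b + dd" .
  have pn0: "0 \<le> proj_norm2 B P w" for w unfolding proj_norm2_def by (simp add: sum_nonneg)
  have a1: "a \<le> 1" unfolding a_def using proj_le[OF fin pr, of u] u1 by simp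
  have b0: "b \<ge> 0" "a \<ge> 0" "dd \<ge> 0" unfolding a_def b_def dd_def using pn0 by simp_all
  have aa: "a * a = proj_norm2 B P u" "b * b = proj_norm2 B P v" unfolding a_def b_def using pn0 by simp_all
  have "1/3 \<le> a * a - b * b" using gap aa by linarith
  also have "\<dots> = (a - b) * (a + b)" by (simp add: algebra_simps)
  also have "\<dots> \<le> dd * 2"
  proof (rule mult_mono)
    show "a - b \<le> dd" using ab by simp
    have sq: "b\<^sup>2 \<le> a\<^sup>2" using aa gap by (simp add: power2_eq_square)
    have "b \<le> a" by (rule power2_le_imp_le[OF sq b0(2)])
    then show "a + b \<le> 2" using a1 by simp
  qed (use b0 in simp_all)
  finally have "1/6 \<le> dd" by linarith
  hence "1/6 * (1/6) \<le> dd * dd" using b0 by (intro mult_mono) simp_all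
  also have "dd * dd = proj_norm2 B P (\<lambda>x. u x - v x)" unfolding dd_def using pn0 by simp
  also have "\<dots> \<le> nrm2 B (\<lambda>x. u x - v x)" by (rule proj_le[OF fin pr])
  finally show ?thesis by simp
qed


definition gq :: "bool list \<Rightarrow> nat set list \<times> bool list \<times> nat \<Rightarrow> nat set list \<times> bool list \<times> nat" where
  "gq z e = (case e of (Ss, bs, w) \<Rightarrow> (Ss, map (\<lambda>(b, S). b \<noteq> AND S z) (zip bs Ss), w))"

lemma query_gq: "query_op z \<psi> e = \<psi> (gq z e)"
  by (cases e) (simp add: query_op_def gq_def)

lemma flip_inv: "length bs = length Ss \<Longrightarrow>
  map2 (\<lambda>b S. b = (\<not> AND S z)) (map2 (\<lambda>b S. b = (\<not> AND S z)) bs Ss) Ss = bs"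
  by (induction bs Ss rule: list_induct2) auto

lemma finite_qbasis: "finite (qbasis m c d)"
proof -
  have "qbasis m c d \<subseteq> {Ss. set Ss \<subseteq> Pow {..<m} \<and> length Ss = c} \<times> {bs. set bs \<subseteq> UNIV \<and> length bs = c} \<times> {..<d}"
    by (auto simp: qbasis_def)
  moreover have "finite ({Ss. set Ss \<subseteq> Pow {..<m} \<and> length Ss = c} \<times> {bs. set bs \<subseteq> (UNIV::bool set) \<and> length bs = c} \<times> {..<d})"
    by (intro finite_cartesian_product finite_lists_length_eq) auto
  ultimately show ?thesis by (rule finite_subset)
qed

lemma gq_in: "e \<in> qbasis m c d \<Longrightarrow> gq z e \<in> qbasis m c d"
  by (cases e) (auto simp: qbasis_def gq_def)

lemma gq_gq: "e \<in> qbasis m c d \<Longrightarrow> gq z (gq z e) = e"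
  by (cases e) (auto simp: qbasis_def gq_def flip_inv)

lemma gq_fst: "fst (gq z e) = fst e"
  by (cases e) (simp add: gq_def)

lemma mass_pres:
  "(\<Sum>e\<in>{e\<in>qbasis m c d. Q (fst e)}. (cmod (query_op z \<psi> e))\<^sup>2) = (\<Sum>e\<in>{e\<in>qbasis m c d. Q (fst e)}. (cmod (\<psi> e))\<^sup>2)"
  unfolding query_gq
  by (rule sum.reindex_bij_witness[where i="gq z" and j="gq z"]) (auto simp: gq_in gq_gq gq_fst)

lemma mass_pres_all:
  "nrm2 (qbasis m c d) (query_op z \<psi>) = nrm2 (qbasis m c d) \<psi>"
  using mass_pres[where m=m and c=c and d=d and Q="\<lambda>_. True" and z=z and \<psi>=\<psi>] by (simp add: nrm2_def)

lemma query_same: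
  assumes "\<forall>S\<in>set (fst e). AND S z = AND S z'"
  shows "query_op z \<psi> e = query_op z' \<psi> e"
proof -
  obtain Ss bs w where e: "e = (Ss, bs, w)" by (cases e) auto
  have eq: "map (\<lambda>(b, S). b \<noteq> AND S z) (zip bs Ss) = map (\<lambda>(b, S). b \<noteq> AND S z') (zip bs Ss)"
    by (rule map_cong[OF refl]) (use assms e in \<open>auto dest: set_zip_rightD\<close>)
  show ?thesis unfolding e query_op_def by (simp only: prod.case eq)
qed


definition za :: "nat \<Rightarrow> bool list \<Rightarrow> bool list" where
  "za k a = a @ replicate (2^k) False"

definition za' :: "nat \<Rightarrow> bool list \<Rightarrow> bool list" where
  "za' k a = (za k a)[k + bin a := True]"

lemma za'_eq: "length a = k \<Longrightarrow> za' k a = a @ (replicate (2^k) False)[bin a := True]"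
  by (simp add: za'_def za_def list_update_append)

lemma ADDR_za: "length a = k \<Longrightarrow> \<not> ADDR k (za k a)"
  using bin_less[of a] by (simp add: ADDR_def za_def)

lemma ADDR_za': "length a = k \<Longrightarrow> ADDR k (za' k a)"
  using bin_less[of a] by (simp add: ADDR_def za'_eq)

lemma len_za: "length a = k \<Longrightarrow> length (za k a) = k + 2^k" by (simp add: za_def)
lemma len_za': "length a = k \<Longrightarrow> length (za' k a) = k + 2^k" by (simp add: za'_def len_za)

lemma za_nth: "length a = k \<Longrightarrow> i < 2^k \<Longrightarrow> za k a ! (k + i) = False"
  by (simp add: za_def nth_append)

lemma diff_props:
  assumes a: "length a = k" and d: "AND S (za k a) \<noteq> AND S (za' k a)"
  shows "k + bin a \<in> S" "\<forall>i\<in>S. za' k a ! i"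
proof -
  have p: "k + bin a < length (za k a)" using bin_less[of a] a by (simp add: len_za)
  have nth': "za' k a ! i = (if i = k + bin a then True else za k a ! i)" for i
    using p by (simp add: za'_def nth_list_update)
  show "k + bin a \<in> S"
  proof (rule ccontr)
    assume "k + bin a \<notin> S"
    hence "\<forall>i\<in>S. za' k a ! i = za k a ! i" using nth' by auto
    thus False using d by (auto simp: AND_def)
  qed
  show "\<forall>i\<in>S. za' k a ! i"
  proof (rule ccontr)
    assume "\<not> (\<forall>i\<in>S. za' k a ! i)"
    then obtain i where i: "i \<in> S" "\<not> za' k a ! i" by blast
    hence "i \<noteq> k + bin a" using nth' by auto
    hence "\<not> za k a ! i" using i nth' by auto
    thus False using d i by (auto simp: AND_def)
  qed
qed

lemma diff_unique:
  assumes a: "length a = k" and b: "length b = k"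
    and da: "AND S (za k a) \<noteq> AND S (za' k a)" and db: "AND S (za k b) \<noteq> AND S (za' k b)"
  shows "a = b"
proof -
  have "bin a = bin b"
  proof (rule ccontr)
    assume ne: "bin a \<noteq> bin b"
    have "k + bin b \<in> S" using diff_props(1)[OF b db] .
    hence "za' k a ! (k + bin b)" using diff_props(2)[OF a da] by blast
    moreover have "za' k a ! (k + bin b) = za k a ! (k + bin b)"
      using ne by (simp add: za'_def)
    moreover have "za k a ! (k + bin b) = False" using za_nth[OF a, of "bin b"] bin_less[of b] b by simp
    ultimately show False by simp
  qed
  thus ?thesis using bin_inj a b by simp
qed

lemma cmod_diff_sq: "(cmod (x - y))\<^sup>2 \<le> 2 * (cmod x)\<^sup>2 + 2 * (cmod y)\<^sup>2"
proof -
  have "cmod (x - y) \<le> cmod x + cmod y" by (rule norm_triangle_ineq4)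
  hence "(cmod (x - y))\<^sup>2 \<le> (cmod x + cmod y)\<^sup>2" by (rule power_mono) simp
  also have "\<dots> \<le> 2 * (cmod x)\<^sup>2 + 2 * (cmod y)\<^sup>2"
  proof -
    have h: "0 \<le> (cmod x - cmod y)\<^sup>2" by simp
    thus ?thesis unfolding power2_eq_square by (simp add: algebra_simps)
  qed
  finally show ?thesis .
qed

lemma lower:
  assumes "qnaadt_computes (k + 2^k) (ADDR k) c"
  shows "(2::real)^k \<le> 144 * real c"
proof -
  define m where "m = k + 2^k"
  obtain d \<psi> P where st: "is_state (qbasis m c d) \<psi>" and pr: "is_projector (qbasis m c d) P"
    and comp: "\<forall>z. length z = m \<longrightarrow>
        (if ADDR k z then proj_norm2 (qbasis m c d) P (query_op z \<psi>) \<ge> 2/3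
         else proj_norm2 (qbasis m c d) P (query_op z \<psi>) \<le> 1/3)"
    using assms unfolding qnaadt_computes_def m_def by blast
  define B where "B = qbasis m c d"
  have fin: "finite B" unfolding B_def by (rule finite_qbasis)
  have psi1: "nrm2 B \<psi> = 1" using st unfolding is_state_def nrm2_def B_def by blast
  define A where "A = {a. set a \<subseteq> (UNIV::bool set) \<and> length a = k}"
  have finA: "finite A" unfolding A_def by (rule finite_lists_length_eq) simp
  have cardA: "card A = 2^k" unfolding A_def card_lists_length_eq[OF finite_UNIV] by simp
  define Dl where "Dl a Ss \<longleftrightarrow> (\<exists>S\<in>set Ss. AND S (za k a) \<noteq> AND S (za' k a))" for a Ss
  define M where "M a = (\<Sum>e\<in>{e\<in>B. Dl a (fst e)}. (cmod (\<psi> e))\<^sup>2)" for a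
  have Mlow: "1/144 \<le> M a" if a: "a \<in> A" for a
  proof -
    have la: "length a = k" using a by (simp add: A_def)
    define u where "u = query_op (za' k a) \<psi>"
    define v where "v = query_op (za k a) \<psi>"
    have gap: "proj_norm2 B P v + 1/3 \<le> proj_norm2 B P u"
      using comp[rule_format, of "za k a"] comp[rule_format, of "za' k a"]
        ADDR_za[OF la] ADDR_za'[OF la] len_za[OF la] len_za'[OF la]
      unfolding u_def v_def B_def m_def by simp
    have "1/36 \<le> nrm2 B (\<lambda>x. u x - v x)"
      by (rule pn_diff[OF fin pr[folded B_def]]) (use gap psi1 in \<open>simp_all add: u_def v_def B_def mass_pres_all\<close>)
    also have "\<dots> = (\<Sum>e\<in>{e\<in>B. Dl a (fst e)}. (cmod (u e - v e))\<^sup>2)"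
      unfolding nrm2_def
    proof (rule sum.mono_neutral_right[OF fin])
      show "\<forall>e\<in>B - {e \<in> B. Dl a (fst e)}. (cmod (u e - v e))\<^sup>2 = 0"
      proof
        fix e assume "e \<in> B - {e \<in> B. Dl a (fst e)}"
        hence "\<not> Dl a (fst e)" by simp
        hence "u e = v e" unfolding u_def v_def Dl_def by (intro query_same) auto
        thus "(cmod (u e - v e))\<^sup>2 = 0" by simp
      qed
    qed auto
    also have "\<dots> \<le> (\<Sum>e\<in>{e\<in>B. Dl a (fst e)}. 2 * (cmod (u e))\<^sup>2 + 2 * (cmod (v e))\<^sup>2)"
      by (rule sum_mono) (rule cmod_diff_sq)
    also have "\<dots> = 2 * (\<Sum>e\<in>{e\<in>B. Dl a (fst e)}. (cmod (u e))\<^sup>2) + 2 * (\<Sum>e\<in>{e\<in>B. Dl a (fst e)}. (cmod (v e))\<^sup>2)"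
      by (simp add: sum.distrib sum_distrib_left)
    also have "\<dots> = 4 * M a"
      unfolding u_def v_def B_def M_def mass_pres by simp
    finally show ?thesis by simp
  qed
  have cardD: "card {a\<in>A. Dl a Ss} \<le> length Ss" for Ss
  proof -
    have "{a\<in>A. Dl a Ss} = (\<Union>S\<in>set Ss. {a\<in>A. AND S (za k a) \<noteq> AND S (za' k a)})"
      unfolding Dl_def by auto
    hence "card {a\<in>A. Dl a Ss} \<le> (\<Sum>S\<in>set Ss. card {a\<in>A. AND S (za k a) \<noteq> AND S (za' k a)})"
      by (simp add: card_UN_le)
    also have "\<dots> \<le> (\<Sum>S\<in>set Ss. 1)"
    proof (rule sum_mono)
      fix S
      have "card {a\<in>A. AND S (za k a) \<noteq> AND S (za' k a)} \<le> Suc 0"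
        using finA by (subst card_le_Suc0_iff_eq) (auto simp: A_def intro: diff_unique)
      thus "card {a\<in>A. AND S (za k a) \<noteq> AND S (za' k a)} \<le> 1" by simp
    qed
    also have "\<dots> \<le> length Ss" by (simp add: card_length)
    finally show ?thesis .
  qed
  have "real (card A) * (1/144) \<le> (\<Sum>a\<in>A. M a)"
    using sum_mono[of A "\<lambda>_. 1/144" M] Mlow by simp
  also have "(\<Sum>a\<in>A. M a) = (\<Sum>a\<in>A. \<Sum>e\<in>B. if Dl a (fst e) then (cmod (\<psi> e))\<^sup>2 else 0)"
    unfolding M_def using fin by (simp add: sum.inter_filter)
  also have "\<dots> = (\<Sum>e\<in>B. \<Sum>a\<in>A. if Dl a (fst e) then (cmod (\<psi> e))\<^sup>2 else 0)"
    by (rule sum.swap)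
  also have "\<dots> = (\<Sum>e\<in>B. (cmod (\<psi> e))\<^sup>2 * real (card {a\<in>A. Dl a (fst e)}))"
  proof (rule sum.cong[OF refl])
    fix e
    show "(\<Sum>a\<in>A. if Dl a (fst e) then (cmod (\<psi> e))\<^sup>2 else 0) = (cmod (\<psi> e))\<^sup>2 * real (card {a\<in>A. Dl a (fst e)})"
      using finA by (simp add: sum.inter_filter[symmetric])
  qed
  also have "\<dots> \<le> (\<Sum>e\<in>B. (cmod (\<psi> e))\<^sup>2 * real c)"
  proof (rule sum_mono)
    fix e assume "e \<in> B"
    hence "length (fst e) = c" by (auto simp: B_def qbasis_def)
    hence "real (card {a\<in>A. Dl a (fst e)}) \<le> real c" using cardD[of "fst e"] by simp
    thus "(cmod (\<psi> e))\<^sup>2 * real (card {a\<in>A. Dl a (fst e)}) \<le> (cmod (\<psi> e))\<^sup>2 * real c"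
      by (rule mult_left_mono) simp
  qed
  also have "\<dots> = real c" using psi1 by (simp add: nrm2_def sum_distrib_right[symmetric])
  finally show ?thesis using cardA by simp
qed


lemma upper_computes: "qnaadt_computes m f m"
proof -
  define Ss0 where "Ss0 = map (\<lambda>i. {i}) [0..<m]"
  define B where "B = qbasis m m 1"
  define e0 where "e0 = (Ss0, replicate m False, 0::nat)"
  define \<psi> where "\<psi> e = (if e = e0 then 1 else 0 :: complex)" for e
  define Q where "Q e \<longleftrightarrow> fst e = Ss0 \<and> f (fst (snd e))" for e :: "nat set list \<times> bool list \<times> nat"
  define P where "P x y = (if x = y \<and> Q x then 1 else 0 :: complex)" for x y
  have fin: "finite B" unfolding B_def by (rule finite_qbasis)
  have e0B: "e0 \<in> B" by (auto simp: B_def qbasis_def e0_def Ss0_def)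
  have st: "is_state B \<psi>"
  proof -
    have "(\<Sum>e\<in>B. (cmod (\<psi> e))\<^sup>2) = (\<Sum>e\<in>B. if e = e0 then 1 else 0)"
      by (rule sum.cong) (auto simp: \<psi>_def)
    also have "\<dots> = 1" using e0B fin by simp
    finally show ?thesis unfolding is_state_def using e0B by (auto simp: \<psi>_def)
  qed
  have pr: "is_projector B P"
    unfolding is_projector_def
  proof (intro conjI ballI)
    fix x y assume "x \<in> B" "y \<in> B"
    show "P x y = cnj (P y x)" by (auto simp: P_def)
    show "(\<Sum>u\<in>B. P x u * P u y) = P x y"
    proof -
      have "(\<Sum>u\<in>B. P x u * P u y) = (\<Sum>u\<in>B. if u = x then P x y else 0)"
        by (rule sum.cong) (auto simp: P_def)
      thus ?thesis using fin \<open>x \<in> B\<close> by simp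
    qed
  qed
  have proj: "proj_norm2 B P (query_op z \<psi>) = of_bool (f z)" if z: "length z = m" for z
  proof -
    define ez where "ez = (Ss0, z, 0::nat)"
    have ezB: "ez \<in> B" using z by (auto simp: B_def qbasis_def ez_def Ss0_def)
    have g0: "gq z e0 = ez"
    proof -
      have "map (\<lambda>(b, S). b \<noteq> AND S z) (zip (replicate m False) Ss0) = z"
        by (rule nth_equalityI) (auto simp: z Ss0_def AND_def)
      thus ?thesis by (simp add: gq_def e0_def ez_def)
    qed
    have qe: "query_op z \<psi> e = (if e = ez then 1 else 0)" if e: "e \<in> B" for e
    proof -
      have "gq z e = e0 \<longleftrightarrow> e = ez"
        using gq_gq[of e m m 1 z] gq_gq[of e0 m m 1 z] e e0B g0 unfolding B_def by metis
      thus ?thesis by (simp add: query_gq \<psi>_def)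
    qed
    have inner: "(\<Sum>y\<in>B. P x y * query_op z \<psi> y) = (if Q x \<and> x = ez then 1 else 0)" if x: "x \<in> B" for x
    proof -
      have "(\<Sum>y\<in>B. P x y * query_op z \<psi> y) = (\<Sum>y\<in>B. if y = x then (if Q x then query_op z \<psi> x else 0) else 0)"
        by (rule sum.cong) (auto simp: P_def)
      also have "\<dots> = (if Q x then query_op z \<psi> x else 0)" using fin x by simp
      finally show ?thesis using qe[OF x] by auto
    qed
    have "proj_norm2 B P (query_op z \<psi>) = (\<Sum>x\<in>B. if x = ez then (if Q ez then 1 else 0) else 0)"
      unfolding proj_norm2_def by (rule sum.cong[OF refl]) (auto simp: inner)
    also have "\<dots> = of_bool (Q ez)" using fin ezB by simp
    also have "Q ez = f z" by (simp add: Q_def ez_def)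
    finally show ?thesis .
  qed
  show ?thesis unfolding qnaadt_computes_def
    by (rule exI[of _ 1], rule exI[of _ \<psi>], rule exI[of _ P]) (use st pr proj in \<open>simp add: B_def\<close>)
qed


lemma ANDr_ind:
  assumes T: "T \<subseteq> {..<m}"
  shows "ANDr T (map (\<lambda>i. i \<in> S) [0..<m]) = (if T \<subseteq> S then 1 else 0)"
proof -
  have fT: "finite T" using T finite_subset by blast
  have "ANDr T (map (\<lambda>i. i \<in> S) [0..<m]) = (\<Prod>i\<in>T. if i \<in> S then 1 else 0)"
    unfolding ANDr_def by (rule prod.cong) (use T in auto)
  also have "\<dots> = (if T \<subseteq> S then 1 else 0)"
  proof (cases "T \<subseteq> S")
    case True thus ?thesis by (auto intro!: prod.neutral)
  next
    case False
    then obtain i where "i \<in> T" "i \<notin> S" by blast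
    thus ?thesis using fT False by (auto simp: prod_zero_iff)
  qed
  finally show ?thesis .
qed

lemma and_unique:
  assumes out: "\<forall>S. \<not> S \<subseteq> {..<m} \<longrightarrow> c S = 0"
    and z: "\<forall>z. length z = m \<longrightarrow> (\<Sum>S\<in>Pow {..<m}. c S * ANDr S z) = 0"
  shows "c S = 0"
proof (induction "card S" arbitrary: S rule: less_induct)
  case less
  show ?case
  proof (cases "S \<subseteq> {..<m}")
    case False thus ?thesis using out by blast
  next
    case True
    have fS: "finite S" using True finite_subset by blast
    define z0 where "z0 = map (\<lambda>i. i \<in> S) [0..<m]"
    have "0 = (\<Sum>T\<in>Pow {..<m}. c T * ANDr T z0)" using z by (simp add: z0_def)
    also have "\<dots> = (\<Sum>T\<in>Pow {..<m}. if T \<subseteq> S then c T else 0)"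
      by (rule sum.cong) (auto simp: z0_def ANDr_ind)
    also have "\<dots> = (\<Sum>T\<in>Pow S. c T)"
      using True by (subst sum.inter_filter[symmetric]) (auto intro!: sum.cong)
    also have "\<dots> = c S + (\<Sum>T\<in>Pow S - {S}. c T)"
      using fS by (subst sum.remove[of _ S]) auto
    also have "(\<Sum>T\<in>Pow S - {S}. c T) = 0"
    proof (rule sum.neutral, rule ballI)
      fix T assume "T \<in> Pow S - {S}"
      hence "T \<subset> S" by auto
      hence "card T < card S" using fS by (simp add: psubset_card_mono)
      thus "c T = 0" by (rule less)
    qed
    finally show ?thesis by simp
  qed
qed

lemma and_coeffs_eq:
  assumes out: "\<forall>S. \<not> S \<subseteq> {..<m} \<longrightarrow> c S = 0"
    and ex: "\<forall>z. length z = m \<longrightarrow> of_bool (f z) = (\<Sum>S\<in>Pow {..<m}. c S * ANDr S z)"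
  shows "and_coeffs m f = c"
  unfolding and_coeffs_def
proof (rule the_equality)
  show "(\<forall>S. \<not> S \<subseteq> {..<m} \<longrightarrow> c S = 0) \<and> (\<forall>z. length z = m \<longrightarrow> of_bool (f z) = (\<Sum>S\<in>Pow {..<m}. c S * ANDr S z))"
    using out ex by blast
  fix c' assume c': "(\<forall>S. \<not> S \<subseteq> {..<m} \<longrightarrow> c' S = 0) \<and> (\<forall>z. length z = m \<longrightarrow> of_bool (f z) = (\<Sum>S\<in>Pow {..<m}. c' S * ANDr S z))"
  have "(\<lambda>S. c' S - c S) S = 0" for S
  proof (rule and_unique[where m=m])
    show "\<forall>S. \<not> S \<subseteq> {..<m} \<longrightarrow> c' S - c S = 0" using c' out by simp
    show "\<forall>z. length z = m \<longrightarrow> (\<Sum>S\<in>Pow {..<m}. (c' S - c S) * ANDr S z) = 0"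
      using c' ex by (simp add: left_diff_distrib sum_subtractf)
  qed
  thus "c' = c" by auto
qed


definition Ls :: "nat \<Rightarrow> bool list set" where "Ls k = {a. set a \<subseteq> (UNIV::bool set) \<and> length a = k}"
definition On :: "bool list \<Rightarrow> nat set" where "On a = {j. j < length a \<and> a ! j}"
definition Zr :: "bool list \<Rightarrow> nat set" where "Zr a = {j. j < length a \<and> \<not> a ! j}"
definition Ix :: "nat \<Rightarrow> (bool list \<times> nat set) set" where "Ix k = Sigma (Ls k) (\<lambda>a. Pow (Zr a))"
definition sig :: "nat \<Rightarrow> bool list \<times> nat set \<Rightarrow> nat set" where
  "sig k i = insert (k + bin (fst i)) (On (fst i) \<union> snd i)"
definition coef :: "nat \<Rightarrow> nat set \<Rightarrow> real" where
  "coef k S = (\<Sum>i\<in>Ix k. if S = sig k i then (-1) ^ card (snd i) else 0)"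

lemma finite_Ls: "finite (Ls k)" unfolding Ls_def by (rule finite_lists_length_eq) simp
lemma finite_On: "finite (On a)" unfolding On_def by simp
lemma finite_Zr: "finite (Zr a)" unfolding Zr_def by simp
lemma finite_Ix: "finite (Ix k)" unfolding Ix_def using finite_Ls finite_Zr by (intro finite_SigmaI) auto

lemma sig_sub: "i \<in> Ix k \<Longrightarrow> sig k i \<subseteq> {..<k + 2^k}"
  using bin_less[of "fst i"] by (auto simp: sig_def Ix_def Ls_def On_def Zr_def)

lemma prod_bool: "finite A \<Longrightarrow> (\<Prod>j\<in>A. (if P j then 1 else 0::real)) = (if \<forall>j\<in>A. P j then 1 else 0)"
proof (cases "\<forall>j\<in>A. P j")
  case True thus ?thesis by (auto intro!: prod.neutral)
next
  case False
  assume "finite A"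
  thus ?thesis using False by (auto simp: prod_zero_iff)
qed

lemma lit:
  assumes a: "length a = k" and z: "k \<le> length z"
  shows "ANDr (On a) z * (\<Prod>j\<in>Zr a. 1 - (if z ! j then 1 else 0)) = (if take k z = a then 1 else 0)"
proof -
  define g where "g j = (if z ! j = a ! j then 1 else (0::real))" for j
  have un: "{..<k} = On a \<union> Zr a" "On a \<inter> Zr a = {}" using a by (auto simp: On_def Zr_def)
  have "ANDr (On a) z = (\<Prod>j\<in>On a. g j)"
    unfolding ANDr_def by (rule prod.cong) (auto simp: g_def On_def)
  moreover have "(\<Prod>j\<in>Zr a. 1 - (if z ! j then 1 else 0)) = (\<Prod>j\<in>Zr a. g j)"
    by (rule prod.cong) (auto simp: g_def Zr_def)
  ultimately have "ANDr (On a) z * (\<Prod>j\<in>Zr a. 1 - (if z ! j then 1 else 0)) = (\<Prod>j\<in>{..<k}. g j)"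
    by (simp add: un prod.union_disjoint finite_On finite_Zr)
  also have "\<dots> = (if \<forall>j\<in>{..<k}. z ! j = a ! j then 1 else 0)"
    unfolding g_def by (rule prod_bool) simp
  also have "(\<forall>j\<in>{..<k}. z ! j = a ! j) \<longleftrightarrow> take k z = a"
    using a z by (auto simp: list_eq_iff_nth_eq)
  finally show ?thesis .
qed

lemma ANDr_sig:
  assumes i: "i \<in> Ix k"
  shows "ANDr (sig k i) z = (if z ! (k + bin (fst i)) then 1 else 0) * (ANDr (On (fst i)) z * ANDr (snd i) z)"
proof -
  obtain a T where iat: "i = (a, T)" by (cases i)
  have a: "length a = k" and T: "T \<subseteq> Zr a" using i iat by (auto simp: Ix_def Ls_def)
  have fT: "finite T" using T finite_Zr finite_subset by blast
  have nin: "k + bin a \<notin> On a \<union> T" using a T by (auto simp: On_def Zr_def)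
  have dis: "On a \<inter> T = {}" using T by (auto simp: On_def Zr_def)
  show ?thesis unfolding iat sig_def ANDr_def
    using nin dis fT finite_On by (simp add: prod.union_disjoint)
qed

lemma expansion:
  assumes z: "length z = k + 2^k"
  shows "of_bool (ADDR k z) = (\<Sum>S\<in>Pow {..<k + 2^k}. coef k S * ANDr S z)"
proof -
  define zr where "zr j = (if z ! j then 1 else 0::real)" for j
  have "(\<Sum>S\<in>Pow {..<k + 2^k}. coef k S * ANDr S z)
      = (\<Sum>S\<in>Pow {..<k + 2^k}. \<Sum>i\<in>Ix k. if S = sig k i then (-1) ^ card (snd i) * ANDr S z else 0)"
    unfolding coef_def sum_distrib_right by (intro sum.cong refl) auto
  also have "\<dots> = (\<Sum>i\<in>Ix k. \<Sum>S\<in>Pow {..<k + 2^k}. if S = sig k i then (-1) ^ card (snd i) * ANDr S z else 0)"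
    by (rule sum.swap)
  also have "\<dots> = (\<Sum>i\<in>Ix k. (-1) ^ card (snd i) * ANDr (sig k i) z)"
    by (intro sum.cong refl) (simp add: sig_sub)
  also have "\<dots> = (\<Sum>i\<in>Ix k. zr (k + bin (fst i)) * ANDr (On (fst i)) z * ((-1) ^ card (snd i) * ANDr (snd i) z))"
    by (intro sum.cong refl) (simp add: ANDr_sig zr_def)
  also have "\<dots> = (\<Sum>a\<in>Ls k. \<Sum>T\<in>Pow (Zr a). zr (k + bin a) * ANDr (On a) z * ((-1) ^ card T * ANDr T z))"
    unfolding Ix_def using finite_Ls finite_Zr by (subst sum.Sigma) (auto simp: case_prod_beta)
  also have "\<dots> = (\<Sum>a\<in>Ls k. zr (k + bin a) * (ANDr (On a) z * (\<Prod>j\<in>Zr a. 1 - zr j)))"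
  proof (intro sum.cong refl)
    fix a
    have "(\<Prod>j\<in>Zr a. 1 - zr j) = (\<Sum>X\<in>Pow (Zr a). (-1) ^ card X * (\<Prod>j\<in>X. zr j) * (\<Prod>j\<in>Zr a - X. 1))"
      by (rule prod_diff_conv_sum[OF finite_Zr])
    also have "\<dots> = (\<Sum>T\<in>Pow (Zr a). (-1) ^ card T * ANDr T z)"
      by (simp add: ANDr_def zr_def)
    finally show "(\<Sum>T\<in>Pow (Zr a). zr (k + bin a) * ANDr (On a) z * ((-1) ^ card T * ANDr T z)) =
        zr (k + bin a) * (ANDr (On a) z * (\<Prod>j\<in>Zr a. 1 - zr j))"
      by (simp add: sum_distrib_left mult_ac)
  qed
  also have "\<dots> = (\<Sum>a\<in>Ls k. if take k z = a then zr (k + bin (take k z)) else 0)"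
  proof (intro sum.cong refl)
    fix a assume "a \<in> Ls k"
    hence "length a = k" by (simp add: Ls_def)
    thus "zr (k + bin a) * (ANDr (On a) z * (\<Prod>j\<in>Zr a. 1 - zr j)) = (if take k z = a then zr (k + bin (take k z)) else 0)"
      using lit[of a k z] z unfolding zr_def by auto
  qed
  also have "\<dots> = zr (k + bin (take k z))"
    using finite_Ls z by (simp add: Ls_def)
  also have "\<dots> = of_bool (ADDR k z)"
    using z by (simp add: zr_def ADDR_def)
  finally show ?thesis ..
qed

lemma sig_parts:
  assumes i: "i \<in> Ix k"
  shows "{x\<in>sig k i. k \<le> x} = {k + bin (fst i)}" "{x\<in>sig k i. x < k} = On (fst i) \<union> snd i"
proof -
  have a: "length (fst i) = k" and T: "snd i \<subseteq> Zr (fst i)" using i by (auto simp: Ix_def Ls_def)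
  show "{x\<in>sig k i. k \<le> x} = {k + bin (fst i)}" using a T by (auto simp: sig_def On_def Zr_def)
  show "{x\<in>sig k i. x < k} = On (fst i) \<union> snd i" using a T by (auto simp: sig_def On_def Zr_def)
qed

lemma sig_inj: "inj_on (sig k) (Ix k)"
proof (rule inj_onI)
  fix i j assume i: "i \<in> Ix k" and j: "j \<in> Ix k" and eq: "sig k i = sig k j"
  have "{k + bin (fst i)} = {k + bin (fst j)}" using sig_parts(1)[OF i] sig_parts(1)[OF j] eq by simp
  hence "bin (fst i) = bin (fst j)" by simp
  moreover have "length (fst i) = k" "length (fst j) = k" using i j by (auto simp: Ix_def Ls_def)
  ultimately have fa: "fst i = fst j" using bin_inj by simp
  have u: "On (fst i) \<union> snd i = On (fst i) \<union> snd j" using sig_parts(2)[OF i] sig_parts(2)[OF j] eq fa by simp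
  have "snd i \<subseteq> Zr (fst i)" "snd j \<subseteq> Zr (fst i)" using i j fa by (auto simp: Ix_def)
  hence "snd i = snd j" using u by (auto simp: On_def Zr_def)
  thus "i = j" using fa by (simp add: prod_eq_iff)
qed

lemma coef_sig: "i \<in> Ix k \<Longrightarrow> coef k (sig k i) = (-1) ^ card (snd i)"
proof -
  assume i: "i \<in> Ix k"
  have "coef k (sig k i) = (\<Sum>j\<in>Ix k. if j = i then (-1) ^ card (snd j) else 0)"
    unfolding coef_def using sig_inj[of k] i by (intro sum.cong refl) (auto dest: inj_onD)
  also have "\<dots> = (-1) ^ card (snd i)" using i finite_Ix by simp
  finally show ?thesis .
qed

lemma coef_zero: "S \<notin> sig k ` Ix k \<Longrightarrow> coef k S = 0"
  unfolding coef_def by (intro sum.neutral) auto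

lemma and_coeffs_ADDR: "and_coeffs (k + 2^k) (ADDR k) = coef k"
proof (rule and_coeffs_eq)
  show "\<forall>S. \<not> S \<subseteq> {..<k + 2 ^ k} \<longrightarrow> coef k S = 0"
  proof (intro allI impI)
    fix S assume "\<not> S \<subseteq> {..<k + 2 ^ k}"
    hence "S \<notin> sig k ` Ix k" using sig_sub by blast
    thus "coef k S = 0" by (rule coef_zero)
  qed
  show "\<forall>z. length z = k + 2 ^ k \<longrightarrow> of_bool (ADDR k z) = (\<Sum>S\<in>Pow {..<k + 2 ^ k}. coef k S * ANDr S z)"
    by (intro allI impI) (rule expansion)
qed

lemma Zr_Cons: "Zr (b # a) = (if b then Suc ` Zr a else insert 0 (Suc ` Zr a))"
proof (rule set_eqI)
  fix x show "x \<in> Zr (b # a) \<longleftrightarrow> x \<in> (if b then Suc ` Zr a else insert 0 (Suc ` Zr a))"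
    by (cases x) (auto simp: Zr_def)
qed

lemma card_Zr_Cons: "card (Zr (b # a)) = (if b then card (Zr a) else Suc (card (Zr a)))"
  by (simp add: Zr_Cons card_image finite_Zr)

lemma count3: "(\<Sum>a\<in>Ls k. (2::nat) ^ card (Zr a)) = 3 ^ k"
proof (induction k)
  case 0
  have "Ls 0 = {[]}" by (auto simp: Ls_def)
  thus ?case by (simp add: Zr_def)
next
  case (Suc k)
  have L: "Ls (Suc k) = (\<lambda>(xs, n). n # xs) ` (Ls k \<times> UNIV)"
    unfolding Ls_def by (rule lists_length_Suc_eq)
  have "(\<Sum>a\<in>Ls (Suc k). (2::nat) ^ card (Zr a)) = (\<Sum>p\<in>Ls k \<times> UNIV. 2 ^ card (Zr (snd p # fst p)))"
    unfolding L by (subst sum.reindex) (auto simp: inj_split_Cons case_prod_beta)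
  also have "\<dots> = (\<Sum>a\<in>Ls k. \<Sum>b\<in>UNIV. 2 ^ card (Zr (b # a)))"
    by (simp add: sum.cartesian_product case_prod_beta)
  also have "\<dots> = (\<Sum>a\<in>Ls k. 3 * 2 ^ card (Zr a))"
    by (intro sum.cong refl) (simp add: UNIV_bool card_Zr_Cons)
  also have "\<dots> = 3 ^ Suc k" using Suc by (simp add: sum_distrib_left[symmetric])
  finally show ?case .
qed

lemma spar_ADDR: "spar (k + 2^k) (ADDR k) = 3 ^ k"
proof -
  have "{S \<in> Pow {..<k + 2^k}. and_coeffs (k + 2^k) (ADDR k) S \<noteq> 0} = sig k ` Ix k"
    unfolding and_coeffs_ADDR using sig_sub coef_sig coef_zero by fastforce
  hence "spar (k + 2^k) (ADDR k) = card (Ix k)"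
    unfolding spar_def using sig_inj by (simp add: card_image)
  also have "\<dots> = (\<Sum>a\<in>Ls k. 2 ^ card (Zr a))"
    unfolding Ix_def using finite_Ls finite_Zr by (simp add: card_SigmaI card_Pow)
  finally show ?thesis using count3 by simp
qed


lemma powr_3k: "real (3 ^ k) powr (1 / log 2 3) = 2 ^ k"
proof -
  have l: "log 2 3 > 0" by simp
  hence l': "log 2 3 \<noteq> 0" by linarith
  have "real (3 ^ k) = 3 powr real k" by (simp add: powr_realpow)
  hence "real (3 ^ k) powr (1 / log 2 3) = 3 powr (real k / log 2 3)" by (simp add: powr_powr)
  also have "\<dots> = (2 powr log 2 3) powr (real k / log 2 3)" by (subst powr_log_cancel) auto
  also have "\<dots> = 2 powr real k" by (simp only: powr_powr) (simp add: l')
  also have "\<dots> = 2 ^ k" by (simp add: powr_realpow)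
  finally show ?thesis .
qed

theorem claimA1:
  shows "\<exists>c1>0. \<exists>c2>0. \<forall>k::nat. k \<ge> 1 \<longrightarrow>
    c1 * real (spar (k + 2^k) (ADDR k)) powr (1 / log 2 3) \<le> real (QNAADT (k + 2^k) (ADDR k)) \<and>
    real (QNAADT (k + 2^k) (ADDR k)) \<le> c2 * real (spar (k + 2^k) (ADDR k)) powr (1 / log 2 3)"
proof -
  have main: "\<forall>k::nat. k \<ge> 1 \<longrightarrow>
    (1/144::real) * real (spar (k + 2^k) (ADDR k)) powr (1 / log 2 3) \<le> real (QNAADT (k + 2^k) (ADDR k)) \<and>
    real (QNAADT (k + 2^k) (ADDR k)) \<le> (2::real) * real (spar (k + 2^k) (ADDR k)) powr (1 / log 2 3)"
  proof (intro allI impI conjI)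
  fix k :: nat
  have sp: "real (spar (k + 2^k) (ADDR k)) powr (1 / log 2 3) = 2 ^ k"
    by (simp only: spar_ADDR powr_3k)
  have ex: "qnaadt_computes (k + 2^k) (ADDR k) (k + 2^k)" by (rule upper_computes)
  have up: "QNAADT (k + 2^k) (ADDR k) \<le> k + 2^k"
    unfolding QNAADT_def using ex by (rule Least_le)
  have "qnaadt_computes (k + 2^k) (ADDR k) (QNAADT (k + 2^k) (ADDR k))"
    unfolding QNAADT_def using ex by (rule LeastI)
  hence low: "(2::real) ^ k \<le> 144 * real (QNAADT (k + 2^k) (ADDR k))" by (rule lower)
  have kk: "k < 2 ^ k" by (rule less_exp)
  hence k1: "real k \<le> real (2 ^ k)" by (simp only: of_nat_le_iff less_imp_le)
  have k2: "real ((2::nat) ^ k) = (2::real) ^ k" by simp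
  show "1 / 144 * real (spar (k + 2^k) (ADDR k)) powr (1 / log 2 3) \<le> real (QNAADT (k + 2^k) (ADDR k))"
    unfolding sp using low by simp
  show "real (QNAADT (k + 2^k) (ADDR k)) \<le> 2 * real (spar (k + 2^k) (ADDR k)) powr (1 / log 2 3)"
  proof -
    have "real (QNAADT (k + 2^k) (ADDR k)) \<le> real (k + 2^k)" using up by (simp only: of_nat_le_iff)
    also have "\<dots> = real k + real (2 ^ k)" by (simp only: of_nat_add)
    also have "\<dots> \<le> 2 * 2 ^ k" using k1 k2 by linarith
    finally show ?thesis unfolding sp .
  qed
  qed
  have "(1/144::real) > 0 \<and> (2::real) > 0" by simp
  thus ?thesis using main by blast
qed

end
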